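(* Let $\mathbf{T}\in\{0,1\}^{n\times\ell}$ be a matrix all of whose columns are dirty, with $\delta(\mathbf{T})\le 2$. If $\ell\ge 5$, then there exists a vector $v\in\{0,1\}^\ell$ such that $d(v,\mathbf{T}[i])\le 1$ for all $i\in[n]$.
   Context: A column of a binary matrix is dirty if it contains both $0$ and $1$. $d$ denotes Hamming distance, $\mathbf{T}[i]$ is the $i$-th row of $\mathbf{T}$, and $\delta(\mathbf{T})=\max_{i\ne i'}d(\mathbf{T}[i],\mathbf{T}[i'])$. *)

theory Defs
  imports Main
begin

text \<open>Binary vectors of length l are modelled as functions nat => bool (only
  indices j < l matter); an n x l binary matrix T is modelled as nat => nat => bool,
  where T i is the i-th row (i < n) and T i j its j-th entry (j < l).\<close>

definition hdist :: "nat \<Rightarrow> (nat \<Rightarrow> bool) \<Rightarrow> (nat \<Rightarrow> bool) \<Rightarrow> nat" where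
  "hdist l x y = card {j. j < l \<and> x j \<noteq> y j}"

definition dirty_col :: "nat \<Rightarrow> (nat \<Rightarrow> nat \<Rightarrow> bool) \<Rightarrow> nat \<Rightarrow> bool" where
  "dirty_col n T j \<longleftrightarrow> (\<exists>i<n. T i j) \<and> (\<exists>i<n. \<not> T i j)"

definition delta_le :: "nat \<Rightarrow> nat \<Rightarrow> (nat \<Rightarrow> nat \<Rightarrow> bool) \<Rightarrow> nat \<Rightarrow> bool" where
  "delta_le n l T k \<longleftrightarrow> (\<forall>i<n. \<forall>i'<n. i \<noteq> i' \<longrightarrow> hdist l (T i) (T i') \<le> k)"

end

theory Submission
  imports Defs
begin

lemma three_le2:
  assumes "finite S" "card S \<le> 2" "a \<in> S" "b \<in> S" "c \<in> S"
  shows "a = b \<or> a = c \<or> b = c"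
proof (rule ccontr)
  assume "\<not> ?thesis"
  then have "card {a,b,c} = 3" by auto
  moreover have "card {a,b,c} \<le> card S" using assms by (intro card_mono) auto
  ultimately show False using assms by simp
qed

theorem lemma11:
  fixes n l :: nat and T :: "nat \<Rightarrow> nat \<Rightarrow> bool"
  assumes "\<forall>j<l. dirty_col n T j"
    and "delta_le n l T 2"
    and "l \<ge> 5"
  shows "\<exists>v :: nat \<Rightarrow> bool. \<forall>i<n. hdist l v (T i) \<le> 1"
proof -
  have fin: "\<And>P. finite {j. j < l \<and> P j}" by simp
  have c2: "card {j. j < l \<and> T i j \<noteq> T i' j} \<le> 2" if "i < n" "i' < n" for i i'
  proof (cases "i = i'")
    case True then show ?thesis by simp
  next
    case False then show ?thesis using assms(2) that unfolding delta_le_def hdist_def by blast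
  qed
  have nd: "x = y \<or> x = z \<or> y = z" if "i < n" "i' < n" "x < l" "y < l" "z < l"
      "T i x \<noteq> T i' x" "T i y \<noteq> T i' y" "T i z \<noteq> T i' z" for i i' x y z
    using three_le2[OF fin c2[OF that(1,2)], of x y z] that by auto
  have cov: "\<exists>i<n. T i j \<noteq> T 0 j" if "j < l" for j
    using assms(1) that unfolding dirty_col_def by (cases "T 0 j") auto
  show ?thesis
  proof (cases "\<forall>i<n. \<forall>x y. x < l \<longrightarrow> y < l \<longrightarrow> T i x \<noteq> T 0 x \<longrightarrow> T i y \<noteq> T 0 y \<longrightarrow> x = y")
    case True
    show ?thesis
    proof (intro exI allI impI)
      fix i assume "i < n"
      have "\<forall>x\<in>{j. j < l \<and> T 0 j \<noteq> T i j}. \<forall>y\<in>{j. j < l \<and> T 0 j \<noteq> T i j}. x = y"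
      proof (intro ballI)
        fix x y assume "x \<in> {j. j < l \<and> T 0 j \<noteq> T i j}" "y \<in> {j. j < l \<and> T 0 j \<noteq> T i j}"
        then have "x < l" "y < l" "T i x \<noteq> T 0 x" "T i y \<noteq> T 0 y" by auto
        then show "x = y" using True \<open>i < n\<close> by blast
      qed
      then show "hdist l (T 0) (T i) \<le> 1" unfolding hdist_def One_nat_def card_le_Suc0_iff_eq[OF fin] .
    qed
  next
    case False
    then obtain k p q where k: "k < n" "p < l" "q < l" "p \<noteq> q" "T k p \<noteq> T 0 p" "T k q \<noteq> T 0 q"
      by blast
    have n0: "0 < n" using k by simp
    have k0: "T k x = T 0 x" if "x < l" "x \<noteq> p" "x \<noteq> q" for x
      using nd[OF k(1) n0 k(2) k(3) that(1)] k that by blast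
    have "\<exists>r. r < l \<and> (\<forall>i<n. (\<exists>x<l. T i x \<noteq> T 0 x) \<longrightarrow> T i r \<noteq> T 0 r)"
    proof (rule ccontr)
      assume nc: "\<not> ?thesis"
      then obtain i1 x1 where i1: "i1 < n" "x1 < l" "T i1 x1 \<noteq> T 0 x1" "T i1 p = T 0 p"
        using k(2) by blast
      obtain i2 x2 where i2: "i2 < n" "x2 < l" "T i2 x2 \<noteq> T 0 x2" "T i2 q = T 0 q"
        using nc k(3) by blast
      have i1q: "T i1 q \<noteq> T 0 q"
      proof (cases "x1 = q")
        case True then show ?thesis using i1 by simp
      next
        case False
        have "x1 \<noteq> p" using i1 by auto
        then have "T i1 x1 \<noteq> T k x1" using k0[OF i1(2) _ False] i1 by simp
        then show ?thesis using nd[OF i1(1) k(1) i1(2) k(2) k(3)] i1 k False \<open>x1 \<noteq> p\<close> by auto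
      qed
      have i2p: "T i2 p \<noteq> T 0 p"
      proof (cases "x2 = p")
        case True then show ?thesis using i2 by simp
      next
        case False
        have "x2 \<noteq> q" using i2 by auto
        then have "T i2 x2 \<noteq> T k x2" using k0[OF i2(2) False] i2 by simp
        then show ?thesis using nd[OF i2(1) k(1) i2(2) k(3) k(2)] i2 k False \<open>x2 \<noteq> q\<close> by auto
      qed
      define A1 where "A1 = {x. x < l \<and> x \<noteq> q \<and> T i1 x \<noteq> T 0 x}"
      define A2 where "A2 = {x. x < l \<and> x \<noteq> p \<and> T i2 x \<noteq> T 0 x}"
      have cA1: "card A1 \<le> 1" unfolding A1_def
        unfolding One_nat_def apply (subst card_le_Suc0_iff_eq) apply simp
        using nd[OF i1(1) n0 _ _ k(3)] i1q by blast
      have cA2: "card A2 \<le> 1" unfolding A2_def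
        unfolding One_nat_def apply (subst card_le_Suc0_iff_eq) apply simp
        using nd[OF i2(1) n0 _ _ k(2)] i2p by blast
      define S where "S = {p,q} \<union> A1 \<union> A2"
      have "card S \<le> card {p,q} + card A1 + card A2" unfolding S_def
        by (meson add_le_mono card_Un_le le_trans order_refl)
      also have "\<dots> \<le> 4" using cA1 cA2 k(4) by simp
      finally have cS: "card S \<le> 4" .
      have "\<not> {..<l} \<subseteq> S"
      proof
        assume "{..<l} \<subseteq> S"
        moreover have "finite S" unfolding S_def A1_def A2_def by simp
        ultimately have "card {..<l} \<le> card S" by (rule card_mono[rotated])
        then show False using cS assms(3) by simp
      qed
      then obtain j where j: "j < l" "j \<notin> S" by auto
      then have j2: "j \<noteq> p" "j \<noteq> q" "T i1 j = T 0 j" "T i2 j = T 0 j"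
        unfolding S_def A1_def A2_def by auto
      obtain i where i: "i < n" "T i j \<noteq> T 0 j" using cov[OF j(1)] by blast
      have ikj: "T i j \<noteq> T k j" using i k0[OF j(1) j2(1,2)] by simp
      have dis: "T i p \<noteq> T 0 p \<or> T i q \<noteq> T 0 q"
      proof (rule ccontr)
        assume "\<not> ?thesis"
        then have "T i p \<noteq> T k p" "T i q \<noteq> T k q" using k(5,6) by auto
        from nd[OF i(1) k(1) j(1) k(2) k(3) ikj this] show False using j2 k(4) by simp
      qed
      show False
      proof (cases "T i p \<noteq> T 0 p")
        case True
        then have "T i q = T 0 q"
          using nd[OF i(1) n0 j(1) k(2) k(3) i(2) True] j2 k(4) by auto
        then have a: "T i j \<noteq> T i1 j" "T i p \<noteq> T i1 p" "T i q \<noteq> T i1 q"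
          using i(2) j2(3) True i1(4) i1q by auto
        from nd[OF i(1) i1(1) j(1) k(2) k(3) a] show False using j2 k(4) by simp
      next
        case False
        then have q: "T i q \<noteq> T 0 q" using dis by simp
        have a: "T i j \<noteq> T i2 j" "T i p \<noteq> T i2 p" "T i q \<noteq> T i2 q"
          using i(2) j2(4) False i2(4) i2p q by auto
        from nd[OF i(1) i2(1) j(1) k(2) k(3) a] show False using j2 k(4) by simp
      qed
    qed
    then obtain r where r: "r < l" "\<And>i x. i < n \<Longrightarrow> x < l \<Longrightarrow> T i x \<noteq> T 0 x \<Longrightarrow> T i r \<noteq> T 0 r"
      by blast
    define v where "v j = (if j = r then \<not> T 0 r else T 0 j)" for j
    show ?thesis
    proof (intro exI allI impI)
      fix i assume i: "i < n"
      have "\<And>x y. x < l \<Longrightarrow> y < l \<Longrightarrow> v x \<noteq> T i x \<Longrightarrow> v y \<noteq> T i y \<Longrightarrow> x = y"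
      proof -
        fix x y assume xy: "x < l" "y < l" "v x \<noteq> T i x" "v y \<noteq> T i y"
        show "x = y"
        proof (cases "x = r \<or> y = r")
          case True
          then show ?thesis using xy r(2)[OF i] r(1) unfolding v_def by (auto split: if_splits)
        next
          case False
          then show ?thesis using xy r(2)[OF i] r(1) nd[OF i n0 xy(1) xy(2) r(1)] unfolding v_def
            by auto
        qed
      qed
      then have "\<forall>x\<in>{j. j < l \<and> v j \<noteq> T i j}. \<forall>y\<in>{j. j < l \<and> v j \<noteq> T i j}. x = y"
        by simp
      then show "hdist l v (T i) \<le> 1" unfolding hdist_def One_nat_def card_le_Suc0_iff_eq[OF fin] .
    qed
  qed
qed

end
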